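(* Let $F$ be an $\omega$-bounded surface with a Nyikos decomposition $F=K\cup\bigcup_{i=1}^n P_i$, where each closed long pipe is written $P_i=\bigcup_{\alpha<\omega_1}U_{i,\alpha}$ as in the definition of closed long pipe, and let $h_t:F\to F$, $t\in[0,1]$, be an isotopy of homeomorphisms. Then $$\Big\{\alpha<\omega_1 \;:\; h_t\Big(K\cup\bigcup_{i=1}^n\bigcup_{\beta<\alpha}U_{i,\beta}\Big)=K\cup\bigcup_{i=1}^n\bigcup_{\beta<\alpha}U_{i,\beta}\text{ for all } t\in[0,1]\Big\}$$ is a closed unbounded subset of $\omega_1$.
   Context: A surface is a connected Hausdorff space locally homeomorphic to $\mathbb{R}^2$ (possibly with boundary where indicated). A space is $\omega$-bounded if every countable subset has compact closure. A (closed) long pipe is a surface $P$ with boundary homeomorphic to $\mathbb{S}^1$ such that $P=\bigcup_{\alpha<\omega_1}U_\alpha$, where each $U_\alpha$ is an open subset of $P$ containing $\partial P$ and homeomorphic to $\mathbb{S}^1\times[0,\infty)$, and whenever $\alpha<\beta$ we have $\overline{U_\alpha}\subset U_\beta$ and the boundary of $U_\alpha$ in $U_\beta$ is homeomorphic to $\mathbb{S}^1$. A Nyikos decomposition of an $\omega$-bounded surface $F$ is an expression $F=K\cup\bigcup_{i=1}^nP_i$ where $K$ is a compact surface with $n$ boundary circles, $P_1,\dots,P_n$ are pairwise disjoint closed long pipes, and each $P_i$ meets $K$ exactly in $\partial P_i$, which is a boundary component of $K$ (distinct pipes attached along distinct boundary components). An isotopy of homeomorphisms is a continuous $H:F\times[0,1]\to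 F$ with each $h_t=H(\cdot,t)$ a homeomorphism. *)

theory Defs
  imports "HOL-Analysis.Analysis"
begin

definition S1 :: "(real \<times> real) set" where
  "S1 = sphere 0 1"

definition halfplane :: "(real \<times> real) set" where
  "halfplane = {p. snd p \<ge> 0}"

definition surface :: "'a topology \<Rightarrow> bool" where
  "surface X \<longleftrightarrow> connected_space X \<and> Hausdorff_space X \<and>
     (\<forall>x\<in>topspace X. \<exists>W. openin X W \<and> x \<in> W \<and>
        (\<exists>V::(real \<times> real) set. open V \<and> subtopology X W homeomorphic_space top_of_set V))"

definition surface_wb :: "'a topology \<Rightarrow> bool" where
  "surface_wb X \<longleftrightarrow> connected_space X \<and> Hausdorff_space X \<and>
     (\<forall>x\<in>topspace X. \<exists>W. openin X W \<and> x \<in> W \<and>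
        (\<exists>V. openin (top_of_set halfplane) V \<and> subtopology X W homeomorphic_space top_of_set V))"

definition mbdry :: "'a topology \<Rightarrow> 'a set" where
  "mbdry X = {x \<in> topspace X. \<not> (\<exists>W. openin X W \<and> x \<in> W \<and>
        (\<exists>V::(real \<times> real) set. open V \<and> subtopology X W homeomorphic_space top_of_set V))}"

definition omega_bounded :: "'a topology \<Rightarrow> bool" where
  "omega_bounded X \<longleftrightarrow> (\<forall>S. S \<subseteq> topspace X \<and> countable S \<longrightarrow> compactin X (X closure_of S))"

text \<open>A well-ordered type is (order-isomorphic to) omega_1 iff it is uncountable and all
  its proper initial segments are countable.\<close>
definition omega1_type :: "('w::wellorder) itself \<Rightarrow> bool" where
  "omega1_type (T::'w itself) \<longleftrightarrow>
     \<not> countable (UNIV :: 'w set) \<and> (\<forall>a::'w. countable {b. b < a})"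

definition club :: "('w::wellorder) set \<Rightarrow> bool" where
  "club C \<longleftrightarrow> (\<forall>a. \<exists>b\<in>C. a \<le> b) \<and>
     (\<forall>S. S \<subseteq> C \<and> S \<noteq> {} \<and> (\<exists>u. \<forall>s\<in>S. s \<le> u) \<longrightarrow> (LEAST u. \<forall>s\<in>S. s \<le> u) \<in> C)"

definition long_pipe :: "'a topology \<Rightarrow> 'a set \<Rightarrow> ('w::wellorder \<Rightarrow> 'a set) \<Rightarrow> bool" where
  "long_pipe X P U \<longleftrightarrow>
     P \<subseteq> topspace X \<and> surface_wb (subtopology X P) \<and>
     subtopology X (mbdry (subtopology X P)) homeomorphic_space top_of_set S1 \<and>
     P = (\<Union>a. U a) \<and>
     (\<forall>a. openin (subtopology X P) (U a) \<and> mbdry (subtopology X P) \<subseteq> U a \<and>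
          subtopology X (U a) homeomorphic_space
            prod_topology (top_of_set S1) (top_of_set {0::real..})) \<and>
     (\<forall>a b. a < b \<longrightarrow> (subtopology X P) closure_of (U a) \<subseteq> U b \<and>
          subtopology X ((subtopology X (U b)) frontier_of (U a))
            homeomorphic_space top_of_set S1)"

definition nyikos_decomp ::
  "'a topology \<Rightarrow> 'a set \<Rightarrow> nat \<Rightarrow> (nat \<Rightarrow> 'a set) \<Rightarrow> (nat \<Rightarrow> 'w::wellorder \<Rightarrow> 'a set) \<Rightarrow> bool" where
  "nyikos_decomp F K n P U \<longleftrightarrow>
     K \<subseteq> topspace F \<and> topspace F = K \<union> (\<Union>i\<in>{1..n}. P i) \<and>
     compact_space (subtopology F K) \<and> surface_wb (subtopology F K) \<and>
     finite (connected_components_of (subtopology F (mbdry (subtopology F K)))) \<and>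
     card (connected_components_of (subtopology F (mbdry (subtopology F K)))) = n \<and>
     (\<forall>C \<in> connected_components_of (subtopology F (mbdry (subtopology F K))).
         subtopology F C homeomorphic_space top_of_set S1) \<and>
     (\<forall>i\<in>{1..n}. long_pipe F (P i) (U i)) \<and>
     (\<forall>i\<in>{1..n}. \<forall>j\<in>{1..n}. i \<noteq> j \<longrightarrow> P i \<inter> P j = {}) \<and>
     (\<forall>i\<in>{1..n}. P i \<inter> K = mbdry (subtopology F (P i)) \<and>
         mbdry (subtopology F (P i)) \<in> connected_components_of (subtopology F (mbdry (subtopology F K)))) \<and>
     inj_on (\<lambda>i. mbdry (subtopology F (P i))) {1..n}"

definition isotopy :: "'a topology \<Rightarrow> ('a \<times> real \<Rightarrow> 'a) \<Rightarrow> bool" where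
  "isotopy F H \<longleftrightarrow>
     continuous_map (prod_topology F (top_of_set {0..1})) F H \<and>
     (\<forall>t\<in>{0..1}. homeomorphic_map F F (\<lambda>x. H (x, t)))"

end

theory Submission
  imports Defs
begin


lemma surface_open_image:
  fixes F :: "'a topology" and f :: "real \<times> real \<Rightarrow> 'a"
  assumes surf: "surface F" and V: "open V" and fc: "continuous_map (top_of_set V) F f"
    and inj: "inj_on f V"
  shows "openin F (f ` V)"
proof (subst openin_subopen, intro ballI)
  fix x assume "x \<in> f ` V"
  then obtain p where p: "p \<in> V" "x = f p" by blast
  have xt: "x \<in> topspace F" using fc p continuous_map_image_subset_topspace by fastforce
  obtain W \<Omega> where W: "openin F W" "x \<in> W" "open (\<Omega>::(real\<times>real) set)"
    "subtopology F W homeomorphic_space top_of_set \<Omega>"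
    using surf xt unfolding surface_def by blast
  then obtain \<phi> \<phi>' where hm: "homeomorphic_maps (subtopology F W) (top_of_set \<Omega>) \<phi> \<phi>'"
    unfolding homeomorphic_space_def by blast
  have WF: "W \<subseteq> topspace F" using W(1) openin_subset by blast
  have tW: "topspace (subtopology F W) = W" using WF by auto
  have phc: "continuous_map (subtopology F W) (top_of_set \<Omega>) \<phi>"
    and inv1: "\<And>y. y \<in> W \<Longrightarrow> \<phi>' (\<phi> y) = y"
    using hm tW unfolding homeomorphic_maps_def by auto
  define V' where "V' = {q \<in> V. f q \<in> W}"
  have oV': "openin (top_of_set V) V'"
    using openin_continuous_map_preimage[OF fc W(1)] unfolding V'_def by simp
  then have "open V'" using V openin_open_trans by blast
  have fcW: "continuous_map (top_of_set V') (subtopology F W) f"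
    by (rule continuous_map_into_subtopology)
       (auto simp: V'_def intro: continuous_map_from_subtopology_mono[OF fc])
  have gc: "continuous_map (top_of_set V') (top_of_set \<Omega>) (\<phi> \<circ> f)"
    using continuous_map_compose[OF fcW phc] .
  then have gco: "continuous_on V' (\<phi> \<circ> f)" and gim: "(\<phi> \<circ> f) ` V' \<subseteq> \<Omega>"
    by (auto simp: continuous_map_subtopology_eu)
  have ginj: "inj_on (\<phi> \<circ> f) V'"
  proof (rule inj_onI)
    fix a b assume ab: "a \<in> V'" "b \<in> V'" "(\<phi> \<circ> f) a = (\<phi> \<circ> f) b"
    then have "\<phi>' (\<phi> (f a)) = \<phi>' (\<phi> (f b))" by simp
    then have "f a = f b" using ab inv1 unfolding V'_def by (metis mem_Collect_eq)
    then show "a = b" using inj ab unfolding V'_def inj_on_def by auto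
  qed
  have og: "open ((\<phi> \<circ> f) ` V')"
    using invariance_of_domain[OF gco \<open>open V'\<close> ginj] .
  define T where "T = {y \<in> topspace (subtopology F W). \<phi> y \<in> (\<phi> \<circ> f) ` V'}"
  have "openin (subtopology F W) T"
    unfolding T_def
    by (rule openin_continuous_map_preimage[OF phc]) (use og gim in \<open>meson open_subset\<close>)
  then have oT: "openin F T" using W(1) openin_trans_full by blast
  have TV: "T = f ` V'"
  proof
    show "T \<subseteq> f ` V'"
    proof
      fix y assume "y \<in> T"
      then obtain q where q: "q \<in> V'" "\<phi> y = \<phi> (f q)" "y \<in> W" unfolding T_def using tW by auto
      then have "\<phi>' (\<phi> y) = \<phi>' (\<phi> (f q))" by simp
      have "f q \<in> W" using q(1) unfolding V'_def by blast
      then have "y = f q" using q inv1 by metis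
      then show "y \<in> f ` V'" using q by auto
    qed
    show "f ` V' \<subseteq> T" unfolding T_def V'_def using tW by auto
  qed
  show "\<exists>T. openin F T \<and> x \<in> T \<and> T \<subseteq> f ` V"
    by (rule exI[of _ T]) (use oT TV p W(2) in \<open>auto simp: V'_def\<close>)
qed

lemma surface_chart_open:
  fixes F :: "'a topology"
  assumes surf: "surface F" and WF: "W \<subseteq> topspace F"
    and hs: "subtopology F W homeomorphic_space top_of_set V" and V: "open (V::(real\<times>real) set)"
  shows "openin F W"
proof -
  obtain \<phi> \<phi>' where hm: "homeomorphic_maps (subtopology F W) (top_of_set V) \<phi> \<phi>'"
    using hs unfolding homeomorphic_space_def by blast
  have tW: "topspace (subtopology F W) = W" using WF by auto
  have c: "continuous_map (top_of_set V) (subtopology F W) \<phi>'" using hm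
    unfolding homeomorphic_maps_def by auto
  then have c2: "continuous_map (top_of_set V) F \<phi>'"
    using continuous_map_in_subtopology by blast
  have im: "\<phi>' ` V = W"
  proof
    show "\<phi>' ` V \<subseteq> W" using continuous_map_image_subset_topspace[OF c] tW by simp
    show "W \<subseteq> \<phi>' ` V"
    proof
      fix w assume "w \<in> W"
      then have "\<phi> w \<in> V" "\<phi>' (\<phi> w) = w" using hm tW unfolding homeomorphic_maps_def
        by (auto dest!: continuous_map_image_subset_topspace) blast
      then show "w \<in> \<phi>' ` V" by force
    qed
  qed
  have inj: "inj_on \<phi>' V"
    by (rule inj_on_inverseI[where g=\<phi>]) (use hm in \<open>auto simp: homeomorphic_maps_def\<close>)
  show ?thesis using surface_open_image[OF surf V c2 inj] im by simp
qed

lemma open_upper: "open {p::real\<times>real. 0 < snd p}"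
proof -
  have "{p::real\<times>real. 0 < snd p} = UNIV \<times> {0<..}" by auto
  then show ?thesis by (simp add: open_Times)
qed

lemma hp_bdry_line:
  fixes X :: "'a topology"
  assumes W: "openin X W" and hm: "homeomorphic_maps (subtopology X W) (top_of_set V) \<psi> \<psi>'"
    and V: "openin (top_of_set halfplane) V" and x: "x \<in> W" "x \<in> mbdry X"
  shows "snd (\<psi> x) = 0"
proof (rule ccontr)
  assume ne: "snd (\<psi> x) \<noteq> 0"
  have WX: "W \<subseteq> topspace X" using W openin_subset by blast
  have tW: "topspace (subtopology X W) = W" using WX by auto
  have psc: "continuous_map (subtopology X W) (top_of_set V) \<psi>"
    and psc': "continuous_map (top_of_set V) (subtopology X W) \<psi>'"
    and i1: "\<And>y. y \<in> W \<Longrightarrow> \<psi>' (\<psi> y) = y" and i2: "\<And>q. q \<in> V \<Longrightarrow> \<psi> (\<psi>' q) = q"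
    using hm tW unfolding homeomorphic_maps_def by auto
  have psV: "\<psi> ` W \<subseteq> V" using continuous_map_image_subset_topspace[OF psc] tW by simp
  have psW: "\<psi>' ` V \<subseteq> W" using continuous_map_image_subset_topspace[OF psc'] tW by simp
  obtain Ob where O: "open Ob" "V = halfplane \<inter> Ob" using V by (auto simp: openin_open)
  have "\<psi> x \<in> V" using psV x(1) by blast
  then have "\<psi> x \<in> halfplane" using O(2) by blast
  then have "snd (\<psi> x) \<ge> 0" unfolding halfplane_def by simp
  then have "snd (\<psi> x) > 0" using ne by linarith
  define V2 where "V2 = V \<inter> {p. 0 < snd p}"
  have V2eq: "V2 = Ob \<inter> {p. 0 < snd p}" using O unfolding V2_def halfplane_def by auto
  have oV2: "open V2" unfolding V2eq using O(1) open_upper by blast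
  define W2 where "W2 = {y \<in> topspace (subtopology X W). \<psi> y \<in> V2}"
  have "openin (top_of_set V) V2" unfolding V2_def
    by (rule openin_subtopology_Int2) (simp add: open_upper)
  then have "openin (subtopology X W) W2" unfolding W2_def
    by (rule openin_continuous_map_preimage[OF psc])
  then have oW2: "openin X W2" using W openin_trans_full by blast
  have W2W: "W2 \<subseteq> W" unfolding W2_def using tW by auto
  have im: "\<psi> ` (topspace (subtopology X W) \<inter> W2) = topspace (top_of_set V) \<inter> V2"
  proof
    show "\<psi> ` (topspace (subtopology X W) \<inter> W2) \<subseteq> topspace (top_of_set V) \<inter> V2"
      unfolding W2_def V2_def by auto
    show "topspace (top_of_set V) \<inter> V2 \<subseteq> \<psi> ` (topspace (subtopology X W) \<inter> W2)"
    proof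
      fix q assume q: "q \<in> topspace (top_of_set V) \<inter> V2"
      then have "q \<in> V" by simp
      then have "\<psi>' q \<in> W" "\<psi> (\<psi>' q) = q" using psW i2 by auto
      then show "q \<in> \<psi> ` (topspace (subtopology X W) \<inter> W2)"
        using q tW unfolding W2_def by (metis (mono_tags, lifting) IntD2 IntI image_eqI mem_Collect_eq)
    qed
  qed
  have hm2: "homeomorphic_maps (subtopology X W2) (top_of_set V2) \<psi> \<psi>'"
  proof -
    have e1: "subtopology (subtopology X W) W2 = subtopology X W2"
      by (simp add: subtopology_subtopology Int_absorb1[OF W2W])
    have e2: "subtopology (top_of_set V) V2 = top_of_set V2"
      by (simp add: subtopology_subtopology V2_def)
    show ?thesis using homeomorphic_maps_subtopologies[OF hm im] unfolding e1 e2 .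
  qed
  have "x \<in> W2" unfolding W2_def V2_def using x psV \<open>snd (\<psi> x) > 0\<close> tW by auto
  then have "x \<notin> mbdry X" unfolding mbdry_def
    using oW2 oV2 hm2 homeomorphic_maps_imp_homeomorphic_space by blast
  then show False using x by blast
qed

lemma hp_line_bdry:
  fixes X :: "'a topology"
  assumes W: "openin X W" and hm: "homeomorphic_maps (subtopology X W) (top_of_set V) \<psi> \<psi>'"
    and V: "openin (top_of_set halfplane) V" and p: "p \<in> V" "snd p = 0"
  shows "\<psi>' p \<in> mbdry X"
proof (rule ccontr)
  have WX: "W \<subseteq> topspace X" using W openin_subset by blast
  have tW: "topspace (subtopology X W) = W" using WX by auto
  have psc: "continuous_map (subtopology X W) (top_of_set V) \<psi>"
    and psc': "continuous_map (top_of_set V) (subtopology X W) \<psi>'"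
    and i1: "\<And>y. y \<in> W \<Longrightarrow> \<psi>' (\<psi> y) = y" and i2: "\<And>q. q \<in> V \<Longrightarrow> \<psi> (\<psi>' q) = q"
    using hm tW unfolding homeomorphic_maps_def by auto
  have psV: "\<psi> ` W \<subseteq> V" using continuous_map_image_subset_topspace[OF psc] tW by simp
  have psW: "\<psi>' ` V \<subseteq> W" using continuous_map_image_subset_topspace[OF psc'] tW by simp
  have Vh: "V \<subseteq> halfplane" using V openin_imp_subset by fastforce
  define y where "y = \<psi>' p"
  have yW: "y \<in> W" using psW p y_def by auto
  assume "\<psi>' p \<notin> mbdry X"
  then have "\<exists>W2. openin X W2 \<and> y \<in> W2 \<and> (\<exists>V2::(real\<times>real) set. open V2 \<and>
         subtopology X W2 homeomorphic_space top_of_set V2)"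
    unfolding y_def using yW WX by (simp add: mbdry_def y_def subset_iff) blast
  then obtain W2 V2 where W2: "openin X W2" "y \<in> W2" "open (V2::(real\<times>real) set)"
     "subtopology X W2 homeomorphic_space top_of_set V2"
    by blast
  then obtain \<theta> \<theta>' where hm2: "homeomorphic_maps (subtopology X W2) (top_of_set V2) \<theta> \<theta>'"
    unfolding homeomorphic_space_def by blast
  have W2X: "W2 \<subseteq> topspace X" using W2(1) openin_subset by blast
  have tW2: "topspace (subtopology X W2) = W2" using W2X by auto
  have thc: "continuous_map (subtopology X W2) (top_of_set V2) \<theta>"
    and thc': "continuous_map (top_of_set V2) (subtopology X W2) \<theta>'"
    and j1: "\<And>y. y \<in> W2 \<Longrightarrow> \<theta>' (\<theta> y) = y" and j2: "\<And>q. q \<in> V2 \<Longrightarrow> \<theta> (\<theta>' q) = q"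
    using hm2 tW2 unfolding homeomorphic_maps_def by auto
  have thV: "\<theta> ` W2 \<subseteq> V2" using continuous_map_image_subset_topspace[OF thc] tW2 by simp
  have thW: "\<theta>' ` V2 \<subseteq> W2" using continuous_map_image_subset_topspace[OF thc'] tW2 by simp
  have thcX: "continuous_map (top_of_set V2) X \<theta>'" using thc' continuous_map_in_subtopology by blast
  define T where "T = {q \<in> V2. \<theta>' q \<in> W}"
  have "openin (top_of_set V2) T"
    using openin_continuous_map_preimage[OF thcX W] unfolding T_def by simp
  then have oT: "open T" using W2(3) openin_open_trans by blast
  have c1: "continuous_map (top_of_set T) (subtopology X W) \<theta>'"
    by (rule continuous_map_into_subtopology)
       (auto simp: T_def intro: continuous_map_from_subtopology_mono[OF thcX])
  have gc: "continuous_map (top_of_set T) (top_of_set V) (\<psi> \<circ> \<theta>')"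
    using continuous_map_compose[OF c1 psc] .
  then have gco: "continuous_on T (\<psi> \<circ> \<theta>')" and gim: "(\<psi> \<circ> \<theta>') ` T \<subseteq> V"
    by (auto simp: continuous_map_subtopology_eu)
  have ginj: "inj_on (\<psi> \<circ> \<theta>') T"
  proof (rule inj_onI)
    fix a b assume ab: "a \<in> T" "b \<in> T" "(\<psi> \<circ> \<theta>') a = (\<psi> \<circ> \<theta>') b"
    then have "\<psi>' (\<psi> (\<theta>' a)) = \<psi>' (\<psi> (\<theta>' b))" by simp
    moreover have "\<theta>' a \<in> W" "\<theta>' b \<in> W" using ab unfolding T_def by auto
    ultimately have "\<theta>' a = \<theta>' b" using i1 by metis
    then have "\<theta> (\<theta>' a) = \<theta> (\<theta>' b)" by simp
    moreover have "a \<in> V2" "b \<in> V2" using ab unfolding T_def by auto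
    ultimately show "a = b" using j2 by metis
  qed
  have og: "open ((\<psi> \<circ> \<theta>') ` T)"
    using invariance_of_domain[OF gco oT ginj] .
  have ty: "\<theta>' (\<theta> y) = y" using j1 W2(2) by blast
  have "\<theta> y \<in> V2" using thV W2(2) by blast
  then have "\<theta> y \<in> T" unfolding T_def using ty yW by simp
  moreover have "(\<psi> \<circ> \<theta>') (\<theta> y) = p" using ty i2[OF p(1)] unfolding y_def[symmetric] by simp
  ultimately have pin: "p \<in> (\<psi> \<circ> \<theta>') ` T" by (metis imageI)
  obtain e where e: "e > 0" "ball p e \<subseteq> (\<psi> \<circ> \<theta>') ` T"
    using og pin open_contains_ball by blast
  define p' where "p' = (fst p, - e / 2)"
  have "dist p p' = e / 2" using p(2) e(1)
    by (cases p) (simp add: p'_def dist_Pair_Pair dist_real_def)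
  then have "p' \<in> ball p e" using e(1) by (simp add: dist_commute)
  then have "p' \<in> halfplane" using e(2) gim Vh by blast
  then show False unfolding p'_def halfplane_def using e(1) by simp
qed



lemma dist_pair_le: "dist (a::real, b::real) (c, d) \<le> \<bar>a - c\<bar> + \<bar>b - d\<bar>"
  using sqrt_sum_squares_le_sum_abs[of "a-c" "b-d"] by (simp add: dist_Pair_Pair dist_real_def)

lemma chart_facts:
  fixes X :: "'a topology"
  assumes W: "openin X W" and hm: "homeomorphic_maps (subtopology X W) (top_of_set V) \<psi> \<psi>'"
  shows "W \<subseteq> topspace X" "\<And>y. y \<in> W \<Longrightarrow> \<psi>' (\<psi> y) = y" "\<And>q. q \<in> V \<Longrightarrow> \<psi> (\<psi>' q) = q"
    "\<psi> ` W \<subseteq> V" "\<psi>' ` V \<subseteq> W" "continuous_map (top_of_set V) X \<psi>'"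
    "continuous_map (subtopology X W) (top_of_set V) \<psi>"
proof -
  show WX: "W \<subseteq> topspace X" using W openin_subset by blast
  have tW: "topspace (subtopology X W) = W" using WX by auto
  have psc: "continuous_map (subtopology X W) (top_of_set V) \<psi>"
    and psc': "continuous_map (top_of_set V) (subtopology X W) \<psi>'"
    using hm unfolding homeomorphic_maps_def by auto
  show "\<And>y. y \<in> W \<Longrightarrow> \<psi>' (\<psi> y) = y" "\<And>q. q \<in> V \<Longrightarrow> \<psi> (\<psi>' q) = q"
    using hm tW unfolding homeomorphic_maps_def by auto
  show "\<psi> ` W \<subseteq> V" using continuous_map_image_subset_topspace[OF psc] tW by simp
  show "\<psi>' ` V \<subseteq> W" using continuous_map_image_subset_topspace[OF psc'] tW by simp
  show "continuous_map (top_of_set V) X \<psi>'" using psc' continuous_map_in_subtopology by blast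
  show "continuous_map (subtopology X W) (top_of_set V) \<psi>" by (rule psc)
qed

lemma boundary_glue:
  fixes F :: "'a topology"
  assumes surf: "surface F" and KF: "K \<subseteq> topspace F" and PF: "P \<subseteq> topspace F"
    and wbK: "surface_wb (subtopology F K)" and wbP: "surface_wb (subtopology F P)"
    and PK: "P \<inter> K = mbdry (subtopology F P)"
    and BPK: "mbdry (subtopology F P) \<subseteq> mbdry (subtopology F K)"
    and Uo: "openin (subtopology F P) Uk"
    and z: "z \<in> mbdry (subtopology F P)" "z \<in> Uk"
  shows "\<exists>Ob. openin F Ob \<and> z \<in> Ob \<and> Ob \<subseteq> K \<union> Uk"
proof -
  define XK where "XK = subtopology F K"
  define XP where "XP = subtopology F P"
  have zP: "z \<in> P" using z(1) unfolding mbdry_def using PF by auto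
  have zK: "z \<in> K" using zP z(1) PK by blast
  have zbK: "z \<in> mbdry XK" using z(1) BPK XK_def by blast
  have tK: "topspace XK = K" using KF XK_def by auto
  have tP: "topspace XP = P" using PF XP_def by auto
  obtain WK VK where WK: "openin XK WK" "z \<in> WK" "openin (top_of_set halfplane) VK"
      "subtopology XK WK homeomorphic_space top_of_set VK"
    using wbK zK tK unfolding surface_wb_def XK_def by metis
  obtain \<kappa> \<kappa>' where hK: "homeomorphic_maps (subtopology XK WK) (top_of_set VK) \<kappa> \<kappa>'"
    using WK(4) unfolding homeomorphic_space_def by blast
  obtain WP VP where WP: "openin XP WP" "z \<in> WP" "openin (top_of_set halfplane) VP"
      "subtopology XP WP homeomorphic_space top_of_set VP"
    using wbP zP tP unfolding surface_wb_def XP_def by metis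
  obtain \<psi> \<psi>' where hP: "homeomorphic_maps (subtopology XP WP) (top_of_set VP) \<psi> \<psi>'"
    using WP(4) unfolding homeomorphic_space_def by blast
  note cK = chart_facts[OF WK(1) hK]
  note cP = chart_facts[OF WP(1) hP]
  have WKK: "WK \<subseteq> K" using cK(1) tK by simp
  have WPP: "WP \<subseteq> P" using cP(1) tP by simp
  have chF: "continuous_map (top_of_set VK) F \<kappa>'"
    using cK(6) unfolding XK_def using continuous_map_in_subtopology by blast
  have psF: "continuous_map (top_of_set VP) F \<psi>'"
    using cP(6) unfolding XP_def using continuous_map_in_subtopology by blast
  obtain OK where OK: "openin F OK" "WK = OK \<inter> K"
    using WK(1) unfolding XK_def openin_subtopology by blast
  obtain OU where OU: "openin F OU" "Uk = OU \<inter> P"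
    using Uo unfolding openin_subtopology by blast
  have VKh: "VK \<subseteq> halfplane" using WK(3) openin_imp_subset by fastforce
  have VPh: "VP \<subseteq> halfplane" using WP(3) openin_imp_subset by fastforce
  have bdK: "\<And>y. y \<in> WK \<Longrightarrow> y \<in> mbdry XK \<Longrightarrow> snd (\<kappa> y) = 0"
    using hp_bdry_line[OF WK(1) hK WK(3)] by blast
  have bdP: "\<And>y. y \<in> WP \<Longrightarrow> y \<in> mbdry XP \<Longrightarrow> snd (\<psi> y) = 0"
    using hp_bdry_line[OF WP(1) hP WP(3)] by blast
  have lnP: "\<And>q. q \<in> VP \<Longrightarrow> snd q = 0 \<Longrightarrow> \<psi>' q \<in> mbdry XP"
    using hp_line_bdry[OF WP(1) hP WP(3)] by blast
  define s0 where "s0 = fst (\<psi> z)"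
  define c0 where "c0 = fst (\<kappa> z)"
  have psz: "\<psi> z = (s0, 0)" using bdP[OF WP(2)] z(1) XP_def s0_def by (metis prod.collapse)
  have chz: "\<kappa> z = (c0, 0)" using bdK[OF WK(2) zbK] c0_def by (metis prod.collapse)
  define A where "A = {p \<in> topspace (top_of_set VP). \<psi>' p \<in> OK \<inter> OU}"
  have "openin (top_of_set VP) A"
    unfolding A_def by (rule openin_continuous_map_preimage[OF psF]) (use OK OU in blast)
  then have "openin (top_of_set halfplane) A" using WP(3) openin_trans by blast
  then obtain OA where OA: "open OA" "A = halfplane \<inter> OA" by (auto simp: openin_open)
  have zOK: "z \<in> OK" using WK(2) OK(2) by blast
  have zOU: "z \<in> OU" using z(2) OU(2) by blast
  have "\<psi> z \<in> A" unfolding A_def using cP(2)[OF WP(2)] cP(4) WP(2) zOK zOU by auto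
  then have "\<psi> z \<in> OA" using OA by blast
  then obtain R where R: "R > 0" "ball (\<psi> z) R \<subseteq> OA" using OA(1) open_contains_ball by blast
  have Rprop: "q \<in> VP \<and> \<psi>' q \<in> OK \<and> \<psi>' q \<in> OU"
    if "q \<in> halfplane" "dist (\<psi> z) q < R" for q
  proof -
    have "q \<in> A" using that R OA(2) by auto
    then show ?thesis unfolding A_def by auto
  qed
  obtain OV where OV: "open OV" "VK = halfplane \<inter> OV" using WK(3) by (auto simp: openin_open)
  have "\<kappa> z \<in> OV" using cK(4) WK(2) OV(2) by blast
  then obtain \<epsilon> where eps: "\<epsilon> > 0" "ball (\<kappa> z) \<epsilon> \<subseteq> OV" using OV(1) open_contains_ball by blast
  have epsprop: "q \<in> VK" if "q \<in> halfplane" "dist (\<kappa> z) q < \<epsilon>" for q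
    using that eps OV(2) by auto
  define I where "I = {s0 - R <..< s0 + R}"
  have line: "(s, 0) \<in> VP \<and> \<psi>' (s, 0) \<in> WK \<and> \<psi>' (s, 0) \<in> mbdry XK \<and> \<psi>' (s,0) \<in> P"
    if "s \<in> I" for s
  proof -
    have h: "(s, 0::real) \<in> halfplane" unfolding halfplane_def by simp
    have "dist (\<psi> z) (s, 0) < R" unfolding psz using that dist_pair_le[of s0 0 s 0]
      unfolding I_def by auto
    then have r: "(s, 0) \<in> VP \<and> \<psi>' (s, 0) \<in> OK \<and> \<psi>' (s, 0) \<in> OU" using Rprop h by blast
    then have b: "\<psi>' (s, 0) \<in> mbdry XP" using lnP by auto
    then have "\<psi>' (s, 0) \<in> P \<inter> K" using PK XP_def by blast
    then show ?thesis using r b BPK OK(2) XK_def XP_def by blast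
  qed
  define \<beta> where "\<beta> s = fst (\<kappa> (\<psi>' (s, 0)))" for s
  have chline: "\<kappa> (\<psi>' (s, 0)) = (\<beta> s, 0)" if "s \<in> I" for s
    using bdK line[OF that] \<beta>_def by (metis prod.collapse)
  have chline': "\<kappa>' (\<beta> s, 0) = \<psi>' (s, 0)" if "s \<in> I" for s
    using chline[OF that] cK(2) line[OF that] by metis
  have s0I: "s0 \<in> I" unfolding I_def using R(1) by simp
  have bs0: "\<beta> s0 = c0" unfolding \<beta>_def using psz[symmetric] cP(2)[OF WP(2)] c0_def by simp
  have sub1: "subtopology XK WK = subtopology F WK"
    unfolding XK_def by (simp add: subtopology_subtopology Int_absorb1[OF WKK])
  have m1: "continuous_map (top_of_set I) (top_of_set VP) (\<lambda>s. (s, 0::real))"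
    by (auto simp: continuous_map_subtopology_eu line intro!: continuous_intros)
  have m2: "continuous_map (top_of_set I) F (\<lambda>s. \<psi>' (s, 0))"
    using continuous_map_compose[OF m1 psF] by (simp add: o_def)
  have m3: "continuous_map (top_of_set I) (subtopology XK WK) (\<lambda>s. \<psi>' (s, 0))"
    unfolding sub1 by (rule continuous_map_into_subtopology[OF m2]) (use line in auto)
  have m4: "continuous_map (top_of_set I) (top_of_set VK) (\<lambda>s. \<kappa> (\<psi>' (s, 0)))"
    using continuous_map_compose[OF m3 cK(7)] by (simp add: o_def)
  then have "continuous_on I (\<lambda>s. \<kappa> (\<psi>' (s, 0)))" by (simp add: continuous_map_subtopology_eu)
  then have bc: "continuous_on I \<beta>" unfolding \<beta>_def by (intro continuous_intros)
  obtain d where d: "d > 0" "\<And>s. s \<in> I \<Longrightarrow> dist s s0 < d \<Longrightarrow> dist (\<beta> s) (\<beta> s0) < \<epsilon> / 2"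
    using bc s0I eps(1) unfolding continuous_on_iff by (metis half_gt_zero)
  define r where "r = min (R / 2) (min d (\<epsilon> / 2))"
  have r: "r > 0" "r \<le> R / 2" "r \<le> d" "r \<le> \<epsilon> / 2" using R(1) d(1) eps(1) unfolding r_def by auto
  define D where "D = {s0 - r <..< s0 + r} \<times> {- r <..< r}"
  have oD: "open D" unfolding D_def by (simp add: open_Times)
  have Dfst: "fst q \<in> I" "\<bar>fst q - s0\<bar> < r" "\<bar>snd q\<bar> < r" if "q \<in> D" for q
    using that r unfolding D_def I_def by (auto simp: abs_less_iff)
  have up: "q \<in> VP \<and> \<psi>' q \<in> OK \<and> \<psi>' q \<in> OU" if "q \<in> D" "0 \<le> snd q" for q
  proof -
    have h: "q \<in> halfplane" using that(2) unfolding halfplane_def by simp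
    have "dist (\<psi> z) q \<le> \<bar>s0 - fst q\<bar> + \<bar>0 - snd q\<bar>"
      unfolding psz using dist_pair_le[of s0 0 "fst q" "snd q"] by simp
    also have "\<dots> < R" using Dfst[OF that(1)] r by auto
    finally show ?thesis using Rprop h by blast
  qed
  define L where "L = (\<lambda>q::real\<times>real. (\<beta> (fst q), - snd q))"
  have low: "L q \<in> VK" if "q \<in> D" "snd q \<le> 0" for q
  proof -
    have h: "L q \<in> halfplane" using that(2) unfolding halfplane_def L_def by simp
    have "dist (\<beta> (fst q)) (\<beta> s0) < \<epsilon> / 2" using d(2)[OF Dfst(1)[OF that(1)]] Dfst(2)[OF that(1)] r
      by (simp add: dist_real_def)
    then have "\<bar>c0 - \<beta> (fst q)\<bar> < \<epsilon> / 2" using bs0 by (simp add: dist_real_def abs_minus_commute)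
    moreover have "dist (\<kappa> z) (L q) \<le> \<bar>c0 - \<beta> (fst q)\<bar> + \<bar>0 - - snd q\<bar>"
      unfolding chz L_def using dist_pair_le by blast
    ultimately have "dist (\<kappa> z) (L q) < \<epsilon>" using Dfst(3)[OF that(1)] r by auto
    then show ?thesis using epsprop h by blast
  qed
  define \<Gamma> where "\<Gamma> = (\<lambda>q. if 0 \<le> snd q then \<psi>' q else \<kappa>' (L q))"
  define Du where "Du = {q \<in> D. 0 \<le> snd q}"
  define Dl where "Dl = {q \<in> D. snd q \<le> 0}"
  have DuVP: "Du \<subseteq> VP" using up unfolding Du_def by blast
  have cu: "continuous_map (top_of_set Du) F \<psi>'"
  proof -
    have "continuous_map (subtopology (top_of_set VP) Du) F \<psi>'"
      by (rule continuous_map_from_subtopology[OF psF])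
    moreover have "subtopology (top_of_set VP) Du = top_of_set Du"
      by (simp add: subtopology_subtopology Int_absorb1[OF DuVP])
    ultimately show ?thesis by simp
  qed
  have cL: "continuous_map (top_of_set Dl) (top_of_set VK) L"
  proof -
    have fI: "fst ` Dl \<subseteq> I" using Dfst unfolding Dl_def by auto
    have "continuous_on Dl (\<lambda>q. \<beta> (fst q))"
      by (rule continuous_on_compose2[OF bc continuous_on_fst[OF continuous_on_id] fI])
    then have "continuous_on Dl L" unfolding L_def by (intro continuous_intros)
    moreover have "L ` Dl \<subseteq> VK" using low unfolding Dl_def by blast
    ultimately show ?thesis by (auto simp: continuous_map_subtopology_eu)
  qed
  have cl: "continuous_map (top_of_set Dl) F (\<lambda>q. \<kappa>' (L q))"
    using continuous_map_compose[OF cL chF] by (simp add: o_def)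
  have sndc: "continuous_map (top_of_set D) euclideanreal snd"
  proof -
    have "continuous_map (top_of_set D) (top_of_set UNIV) snd"
      by (auto simp: continuous_map_subtopology_eu intro!: continuous_intros)
    then show ?thesis by simp
  qed
  have eqU: "subtopology (top_of_set D) {x. x \<in> topspace (top_of_set D) \<and> 0 \<le> snd x} = top_of_set Du"
    unfolding Du_def by (simp add: subtopology_subtopology Int_def)
  have eqL: "subtopology (top_of_set D) {x. x \<in> topspace (top_of_set D) \<and> snd x \<le> 0} = top_of_set Dl"
    unfolding Dl_def by (simp add: subtopology_subtopology Int_def)
  have GammaC: "continuous_map (top_of_set D) F \<Gamma>"
  proof -
    have "continuous_map (top_of_set D) F (\<lambda>x. if (\<lambda>x. 0::real) x \<le> snd x then \<psi>' x else \<kappa>' (L x))"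
    proof (rule continuous_map_cases_le)
      show "continuous_map (top_of_set D) euclideanreal (\<lambda>x. 0::real)" by simp
      show "continuous_map (top_of_set D) euclideanreal snd" by (rule sndc)
      show "continuous_map (subtopology (top_of_set D) {x. x \<in> topspace (top_of_set D) \<and> 0 \<le> snd x}) F \<psi>'"
        unfolding eqU by (rule cu)
      show "continuous_map (subtopology (top_of_set D) {x. x \<in> topspace (top_of_set D) \<and> snd x \<le> 0}) F (\<lambda>q. \<kappa>' (L q))"
        unfolding eqL by (rule cl)
      fix x assume x: "x \<in> topspace (top_of_set D)" "0 = snd x"
      then have xD: "x \<in> D" by simp
      have "fst x \<in> I" using Dfst[OF xD] by blast
      moreover have "x = (fst x, 0)" using x(2) by (metis prod.collapse)
      ultimately show "\<psi>' x = \<kappa>' (L x)" unfolding L_def using chline' x(2)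
        by (metis add.inverse_neutral)
    qed
    then show ?thesis unfolding \<Gamma>_def by simp
  qed
  have lowK: "\<kappa>' (L q) \<in> WK" "\<kappa>' (L q) \<notin> P" if "q \<in> D" "snd q < 0" for q
  proof -
    have LV: "L q \<in> VK" using low that by auto
    show w: "\<kappa>' (L q) \<in> WK" using cK(5) LV by blast
    show "\<kappa>' (L q) \<notin> P"
    proof
      assume "\<kappa>' (L q) \<in> P"
      then have "\<kappa>' (L q) \<in> mbdry XK" using w WKK PK BPK XP_def XK_def by blast
      then have "snd (\<kappa> (\<kappa>' (L q))) = 0" using bdK w by blast
      then show False using cK(3)[OF LV] that(2) unfolding L_def by simp
    qed
  qed
  have GammaI: "inj_on \<Gamma> D"
  proof (rule inj_onI)
    fix p q assume p: "p \<in> D" and q: "q \<in> D" and e: "\<Gamma> p = \<Gamma> q"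
    show "p = q"
    proof (cases "0 \<le> snd p")
      case True
      then have pP: "\<Gamma> p \<in> P" unfolding \<Gamma>_def using up[OF p True] cP(5) WPP by auto
      show ?thesis
      proof (cases "0 \<le> snd q")
        case True2: True
        have "\<psi>' p = \<psi>' q" using e True True2 unfolding \<Gamma>_def by simp
        then show ?thesis using cP(3) up[OF p True] up[OF q True2] by metis
      next
        case False
        then have "\<Gamma> q \<notin> P" unfolding \<Gamma>_def using lowK[OF q] by simp
        then show ?thesis using pP e by simp
      qed
    next
      case False
      then have nP: "\<Gamma> p \<notin> P" unfolding \<Gamma>_def using lowK[OF p] by simp
      show ?thesis
      proof (cases "0 \<le> snd q")
        case True
        then have "\<Gamma> q \<in> P" unfolding \<Gamma>_def using up[OF q True] cP(5) WPP by auto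
        then show ?thesis using nP e by simp
      next
        case False2: False
        have "\<kappa>' (L p) = \<kappa>' (L q)" using e False False2 unfolding \<Gamma>_def by simp
        then have "L p = L q" using cK(3) low[OF p] low[OF q] False False2 by (metis linorder_linear)
        then have eb: "\<beta> (fst p) = \<beta> (fst q)" and es: "snd p = snd q" unfolding L_def by auto
        have "\<psi>' (fst p, 0) = \<psi>' (fst q, 0)" using chline' Dfst(1)[OF p] Dfst(1)[OF q] eb by metis
        then have "(fst p, 0::real) = (fst q, 0)"
          using cP(3) line Dfst(1)[OF p] Dfst(1)[OF q] by metis
        then show ?thesis using es by (simp add: prod_eq_iff)
      qed
    qed
  qed
  have GammaS: "\<Gamma> ` D \<subseteq> K \<union> Uk"
  proof
    fix y assume "y \<in> \<Gamma> ` D"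
    then obtain q where q: "q \<in> D" "y = \<Gamma> q" by blast
    show "y \<in> K \<union> Uk"
    proof (cases "0 \<le> snd q")
      case True
      then have "y = \<psi>' q" "\<psi>' q \<in> OU" "\<psi>' q \<in> P" using q up[OF q(1) True] cP(5) WPP
        unfolding \<Gamma>_def by auto
      then show ?thesis using OU(2) by blast
    next
      case False
      then show ?thesis using q lowK[OF q(1)] WKK unfolding \<Gamma>_def by auto
    qed
  qed
  have "(s0, 0) \<in> D" unfolding D_def using r(1) by simp
  moreover have "\<Gamma> (s0, 0) = z" unfolding \<Gamma>_def using cP(2)[OF WP(2), unfolded psz] by simp
  ultimately have zin: "z \<in> \<Gamma> ` D" by (metis imageI)
  show ?thesis using surface_open_image[OF surf oD GammaC GammaI] zin GammaS by blast
qed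

lemma second_countable_eucl: "second_countable (euclidean :: ('b::second_countable_topology) topology)"
proof -
  obtain B :: "'b set set" where B: "countable B" "\<And>C. C \<in> B \<Longrightarrow> open C"
      "\<And>S. open S \<Longrightarrow> \<exists>U\<subseteq>B. S = \<Union>U"
    using univ_second_countable by blast
  show ?thesis unfolding second_countable_def
  proof (intro exI conjI allI impI)
    show "countable B" by fact
    show "\<forall>V\<in>B. openin euclidean V" using B(2) by simp
    fix U :: "'b set" and x :: 'b assume "openin euclidean U \<and> x \<in> U"
    then obtain W where "W \<subseteq> B" "U = \<Union>W" "x \<in> U" using B(3) by auto
    then show "\<exists>V\<in>B. x \<in> V \<and> V \<subseteq> U" by blast
  qed
qed

lemma separable_top_of_set: "separable_space (top_of_set (A :: ('b::second_countable_topology) set))"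
  by (intro second_countable_imp_separable_space second_countable_subtopology second_countable_eucl)



locale nyk =
  fixes F :: "'a topology" and K :: "'a set" and n :: nat
    and P :: "nat \<Rightarrow> 'a set" and U :: "nat \<Rightarrow> 'w::wellorder \<Rightarrow> 'a set"
  assumes surf: "surface F" and ny: "nyikos_decomp F K n P U"
begin

lemma nyD: "K \<subseteq> topspace F" "topspace F = K \<union> (\<Union>i\<in>{1..n}. P i)"
  "compact_space (subtopology F K)" "surface_wb (subtopology F K)"
  "finite (connected_components_of (subtopology F (mbdry (subtopology F K))))"
  "card (connected_components_of (subtopology F (mbdry (subtopology F K)))) = n"
  "\<forall>i\<in>{1..n}. long_pipe F (P i) (U i)"
  "\<forall>i\<in>{1..n}. P i \<inter> K = mbdry (subtopology F (P i)) \<and>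
         mbdry (subtopology F (P i)) \<in> connected_components_of (subtopology F (mbdry (subtopology F K)))"
  "inj_on (\<lambda>i. mbdry (subtopology F (P i))) {1..n}"
proof -
  note A = ny[unfolded nyikos_decomp_def]
  show "K \<subseteq> topspace F" using A by (rule conjunct1)
  show "topspace F = K \<union> (\<Union>i\<in>{1..n}. P i)" using A[THEN conjunct2] by (rule conjunct1)
  show "compact_space (subtopology F K)" using A[THEN conjunct2, THEN conjunct2] by (rule conjunct1)
  show "surface_wb (subtopology F K)" using A[THEN conjunct2, THEN conjunct2, THEN conjunct2] by (rule conjunct1)
  show "finite (connected_components_of (subtopology F (mbdry (subtopology F K))))"
    using A[THEN conjunct2, THEN conjunct2, THEN conjunct2, THEN conjunct2] by (rule conjunct1)
  show "card (connected_components_of (subtopology F (mbdry (subtopology F K)))) = n"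
    using A[THEN conjunct2, THEN conjunct2, THEN conjunct2, THEN conjunct2, THEN conjunct2] by (rule conjunct1)
  note B = A[THEN conjunct2, THEN conjunct2, THEN conjunct2, THEN conjunct2, THEN conjunct2, THEN conjunct2, THEN conjunct2]
  show "\<forall>i\<in>{1..n}. long_pipe F (P i) (U i)" using B by (rule conjunct1)
  show "\<forall>i\<in>{1..n}. P i \<inter> K = mbdry (subtopology F (P i)) \<and>
         mbdry (subtopology F (P i)) \<in> connected_components_of (subtopology F (mbdry (subtopology F K)))"
    using B[THEN conjunct2, THEN conjunct2] by (rule conjunct1)
  show "inj_on (\<lambda>i. mbdry (subtopology F (P i))) {1..n}"
    using B[THEN conjunct2, THEN conjunct2] by (rule conjunct2)
qed

lemma KF: "K \<subseteq> topspace F" using nyD(1) .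
lemma Kc: "compact_space (subtopology F K)" using nyD(3) .
lemma wbK: "surface_wb (subtopology F K)" using nyD(4) .
lemma finc: "finite (connected_components_of (subtopology F (mbdry (subtopology F K))))" using nyD(5) .
lemma cardc: "card (connected_components_of (subtopology F (mbdry (subtopology F K)))) = n" using nyD(6) .
lemma lp: "i \<in> {1..n} \<Longrightarrow> long_pipe F (P i) (U i)" using nyD(7) by (rule bspec)
lemma PK: "i \<in> {1..n} \<Longrightarrow> P i \<inter> K = mbdry (subtopology F (P i))"
  using nyD(8) by (metis (no_types, lifting))
lemma Pc: "i \<in> {1..n} \<Longrightarrow> mbdry (subtopology F (P i)) \<in> connected_components_of (subtopology F (mbdry (subtopology F K)))"
  using nyD(8) by (metis (no_types, lifting))
lemma injb: "inj_on (\<lambda>i. mbdry (subtopology F (P i))) {1..n}" using nyD(9) .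

lemma lpD: assumes i: "i \<in> {1..n}"
  shows "P i \<subseteq> topspace F" "surface_wb (subtopology F (P i))" "P i = (\<Union>a. U i a)"
    "\<forall>a. openin (subtopology F (P i)) (U i a) \<and> mbdry (subtopology F (P i)) \<subseteq> U i a \<and>
          subtopology F (U i a) homeomorphic_space
            prod_topology (top_of_set S1) (top_of_set {0::real..})"
    "\<forall>a b. a < b \<longrightarrow> (subtopology F (P i)) closure_of (U i a) \<subseteq> U i b \<and>
          subtopology F ((subtopology F (U i b)) frontier_of (U i a))
            homeomorphic_space top_of_set S1"
proof -
  note A = lp[OF i, unfolded long_pipe_def]
  show "P i \<subseteq> topspace F" using A by (rule conjunct1)
  show "surface_wb (subtopology F (P i))" using A[THEN conjunct2] by (rule conjunct1)
  note B = A[THEN conjunct2, THEN conjunct2, THEN conjunct2]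
  show "P i = (\<Union>a. U i a)" using B by (rule conjunct1)
  show "\<forall>a. openin (subtopology F (P i)) (U i a) \<and> mbdry (subtopology F (P i)) \<subseteq> U i a \<and>
          subtopology F (U i a) homeomorphic_space
            prod_topology (top_of_set S1) (top_of_set {0::real..})"
    using B[THEN conjunct2] by (rule conjunct1)
  show "\<forall>a b. a < b \<longrightarrow> (subtopology F (P i)) closure_of (U i a) \<subseteq> U i b \<and>
          subtopology F ((subtopology F (U i b)) frontier_of (U i a))
            homeomorphic_space top_of_set S1"
    using B[THEN conjunct2] by (rule conjunct2)
qed

lemma PF: "i \<in> {1..n} \<Longrightarrow> P i \<subseteq> topspace F" using lpD(1) .
lemma wbP: "i \<in> {1..n} \<Longrightarrow> surface_wb (subtopology F (P i))" using lpD(2) .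
lemma PU: "i \<in> {1..n} \<Longrightarrow> P i = (\<Union>a. U i a)" using lpD(3) .
lemma Uo: "i \<in> {1..n} \<Longrightarrow> openin (subtopology F (P i)) (U i a)" using lpD(4) by blast
lemma BU: "i \<in> {1..n} \<Longrightarrow> mbdry (subtopology F (P i)) \<subseteq> U i a" using lpD(4) by blast
lemma Uh: "i \<in> {1..n} \<Longrightarrow> subtopology F (U i a) homeomorphic_space
            prod_topology (top_of_set S1) (top_of_set {0::real..})" using lpD(4) by blast
lemma Ucl: "i \<in> {1..n} \<Longrightarrow> a < b \<Longrightarrow> (subtopology F (P i)) closure_of (U i a) \<subseteq> U i b"
  using lpD(5) by blast

lemma UP: "i \<in> {1..n} \<Longrightarrow> U i a \<subseteq> P i"
  using PU by blast

lemma UF: "i \<in> {1..n} \<Longrightarrow> U i a \<subseteq> topspace F"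
  using UP PF by blast

lemma Umono: assumes "i \<in> {1..n}" "a \<le> b" shows "U i a \<subseteq> U i b"
proof (cases "a = b")
  case False
  then have "a < b" using assms(2) by simp
  have "U i a \<subseteq> topspace (subtopology F (P i))" using UP[OF assms(1)] PF[OF assms(1)] by auto
  then have "U i a \<subseteq> (subtopology F (P i)) closure_of (U i a)" by (rule closure_of_subset)
  then show ?thesis using Ucl[OF assms(1) \<open>a < b\<close>] by blast
qed simp

lemma comps_eq: "connected_components_of (subtopology F (mbdry (subtopology F K)))
   = (\<lambda>i. mbdry (subtopology F (P i))) ` {1..n}"
proof -
  have "(\<lambda>i. mbdry (subtopology F (P i))) ` {1..n} \<subseteq> connected_components_of (subtopology F (mbdry (subtopology F K)))"
    using Pc by blast
  moreover have "card ((\<lambda>i. mbdry (subtopology F (P i))) ` {1..n}) = n"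
    using card_image[OF injb] by simp
  ultimately show ?thesis using card_subset_eq[OF finc] cardc by metis
qed

lemma BPK: "i \<in> {1..n} \<Longrightarrow> mbdry (subtopology F (P i)) \<subseteq> mbdry (subtopology F K)"
  using connected_components_of_subset[OF Pc] by auto

lemma bdK_cover: assumes "x \<in> mbdry (subtopology F K)"
  shows "\<exists>k\<in>{1..n}. x \<in> mbdry (subtopology F (P k))"
proof -
  have "mbdry (subtopology F K) \<subseteq> topspace F" unfolding mbdry_def using KF by auto
  then have "x \<in> topspace (subtopology F (mbdry (subtopology F K)))" using assms by auto
  then have "x \<in> \<Union>(connected_components_of (subtopology F (mbdry (subtopology F K))))"
    by (simp add: Union_connected_components_of)
  then show ?thesis unfolding comps_eq by blast
qed

lemma Y_open: "openin F (K \<union> (\<Union>i\<in>{1..n}. U i b))"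
proof (subst openin_subopen, intro ballI)
  fix x assume x: "x \<in> K \<union> (\<Union>i\<in>{1..n}. U i b)"
  show "\<exists>T. openin F T \<and> x \<in> T \<and> T \<subseteq> K \<union> (\<Union>i\<in>{1..n}. U i b)"
  proof (cases "x \<in> K")
    case True
    show ?thesis
    proof (cases "x \<in> mbdry (subtopology F K)")
      case True
      then obtain k where k: "k \<in> {1..n}" "x \<in> mbdry (subtopology F (P k))" using bdK_cover by blast
      obtain Ob where "openin F Ob" "x \<in> Ob" "Ob \<subseteq> K \<union> U k b"
        using boundary_glue[OF surf KF PF[OF k(1)] wbK wbP[OF k(1)] PK[OF k(1)] BPK[OF k(1)]
            Uo[OF k(1)] k(2)] BU[OF k(1)] k(2) by blast
      then show ?thesis using k(1) by blast
    next
      case False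
      then obtain W V where W: "openin (subtopology F K) W" "x \<in> W" "open (V::(real\<times>real) set)"
          "subtopology (subtopology F K) W homeomorphic_space top_of_set V"
        using \<open>x \<in> K\<close> KF unfolding mbdry_def by auto
      have WK: "W \<subseteq> K" using openin_subset[OF W(1)] by auto
      have "subtopology (subtopology F K) W = subtopology F W"
        by (simp add: subtopology_subtopology Int_absorb1[OF WK])
      then have "openin F W" using surface_chart_open[OF surf _ _ W(3)] W(4) WK KF by auto
      then show ?thesis using W(2) WK by blast
    qed
  next
    case False
    then obtain i where i: "i \<in> {1..n}" "x \<in> U i b" using x by blast
    have xP: "x \<in> P i" using UP i by blast
    have "x \<notin> mbdry (subtopology F (P i))" using PK[OF i(1)] False by blast
    then obtain W V where W: "openin (subtopology F (P i)) W" "x \<in> W" "open (V::(real\<times>real) set)"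
          "subtopology (subtopology F (P i)) W homeomorphic_space top_of_set V"
      using xP PF[OF i(1)] unfolding mbdry_def by auto
    have WP: "W \<subseteq> P i" using openin_subset[OF W(1)] by auto
    have "subtopology (subtopology F (P i)) W = subtopology F W"
      by (simp add: subtopology_subtopology Int_absorb1[OF WP])
    then have oW: "openin F W" using surface_chart_open[OF surf _ _ W(3)] W(4) WP PF[OF i(1)] by auto
    obtain OU where OU: "openin F OU" "U i b = OU \<inter> P i"
      using Uo[OF i(1)] unfolding openin_subtopology by blast
    have "openin F (W \<inter> OU)" using oW OU(1) by blast
    moreover have "x \<in> W \<inter> OU" using W(2) i(2) OU(2) by blast
    moreover have "W \<inter> OU \<subseteq> U i b" using WP OU(2) by blast
    ultimately show ?thesis using i(1) by blast
  qed
qed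

lemma Ucl_compact:
  assumes ob: "omega_bounded F" and i: "i \<in> {1..n}"
  shows "compactin F (F closure_of (U i a))"
proof -
  have "separable_space (prod_topology (top_of_set S1) (top_of_set {0::real..}))"
    unfolding prod_topology_subtopology_eu by (rule separable_top_of_set)
  then have "separable_space (subtopology F (U i a))"
    using homeomorphic_separable_space[OF Uh[OF i]] by blast
  then obtain C where C: "countable C" "C \<subseteq> topspace (subtopology F (U i a))"
      "(subtopology F (U i a)) closure_of C = topspace (subtopology F (U i a))"
    unfolding separable_space_def by blast
  have tU: "topspace (subtopology F (U i a)) = U i a" using UF[OF i] by auto
  have CU: "C \<subseteq> U i a" using C(2) tU by simp
  have "(subtopology F (U i a)) closure_of C = U i a \<inter> F closure_of C"
    by (rule closure_of_subtopology_open) (use CU in blast)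
  then have "U i a \<inter> F closure_of C = U i a" using C(3) tU by simp
  then have Ucl: "U i a \<subseteq> F closure_of C" by blast
  have eq: "F closure_of (U i a) = F closure_of C"
  proof
    show "F closure_of U i a \<subseteq> F closure_of C"
      using closure_of_minimal[OF Ucl closedin_closure_of] .
    show "F closure_of C \<subseteq> F closure_of U i a" using closure_of_mono[OF CU] .
  qed
  have "C \<subseteq> topspace F" using CU UF[OF i] by blast
  then show ?thesis unfolding eq using ob C(1) unfolding omega_bounded_def by blast
qed

end



lemma w_bound:
  assumes w1: "omega1_type TYPE('w::wellorder)" and S: "countable (S::'w set)"
  shows "\<exists>u. \<forall>s\<in>S. s < u"
proof -
  have "countable (\<Union>s\<in>S. {b. b \<le> s})"
  proof (rule countable_UN[OF S])
    fix s :: 'w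
    have "{b. b \<le> s} = insert s {b. b < s}" by auto
    then show "countable {b. b \<le> s}" using w1 unfolding omega1_type_def by simp
  qed
  moreover have "\<not> countable (UNIV::'w set)" using w1 unfolding omega1_type_def by simp
  ultimately obtain u where "u \<notin> (\<Union>s\<in>S. {b. b \<le> s})"
    by (metis UNIV_I countable_subset subsetI)
  then show ?thesis by (auto simp: not_le)
qed

locale nyk2 = nyk F K n P U
  for F :: "'a topology" and K :: "'a set" and n :: nat
    and P :: "nat \<Rightarrow> 'a set" and U :: "nat \<Rightarrow> 'w::wellorder \<Rightarrow> 'a set" +
  fixes H :: "'a \<times> real \<Rightarrow> 'a"
  assumes w1: "omega1_type TYPE('w)" and ob: "omega_bounded F" and iso: "isotopy F H"
begin

definition X :: "'w \<Rightarrow> 'a set" where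
  "X a = K \<union> (\<Union>i\<in>{1..n}. \<Union>b\<in>{b. b < a}. U i b)"

definition Y :: "'w \<Rightarrow> 'a set" where
  "Y b = K \<union> (\<Union>i\<in>{1..n}. U i b)"

definition C :: "'w \<Rightarrow> 'a set" where
  "C a = K \<union> (\<Union>i\<in>{1..n}. F closure_of (U i a))"

lemma X_mono: "a \<le> a' \<Longrightarrow> X a \<subseteq> X a'"
  unfolding X_def by fastforce

lemma XF: "X a \<subseteq> topspace F"
  unfolding X_def using KF UF by blast

lemma X_open: assumes "b0 < a" shows "openin F (X a)"
proof -
  have "X a = (\<Union>b\<in>{b. b < a}. Y b)"
  proof
    show "X a \<subseteq> (\<Union>b\<in>{b. b < a}. Y b)" unfolding X_def Y_def using assms by blast
    show "(\<Union>b\<in>{b. b < a}. Y b) \<subseteq> X a" unfolding X_def Y_def by blast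
  qed
  moreover have "openin F (\<Union>b\<in>{b. b < a}. Y b)"
    using Y_open unfolding Y_def by (intro openin_Union) blast
  ultimately show ?thesis by simp
qed

lemma Yo: "openin F (Y b)" unfolding Y_def by (rule Y_open)

lemma YX: "b < u \<Longrightarrow> Y b \<subseteq> X u" unfolding X_def Y_def by blast

lemma inY: assumes "x \<in> topspace F" shows "\<exists>b. x \<in> Y b"
proof -
  have "x \<in> K \<or> (\<exists>i\<in>{1..n}. x \<in> P i)" using nyD(2) assms by blast
  then show ?thesis
  proof
    assume "x \<in> K" then show ?thesis unfolding Y_def by blast
  next
    assume "\<exists>i\<in>{1..n}. x \<in> P i"
    then obtain i where i: "i \<in> {1..n}" "x \<in> P i" by blast
    then obtain a where "x \<in> U i a" using PU[OF i(1)] by blast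
    then show ?thesis using i(1) unfolding Y_def by blast
  qed
qed

lemma cover: assumes S: "compactin F S" shows "\<exists>g. S \<subseteq> X g"
proof -
  have cov: "S \<subseteq> \<Union>(range Y)"
  proof
    fix x assume "x \<in> S"
    then have "x \<in> topspace F" using S compactin_subset_topspace by blast
    then obtain b where "x \<in> Y b" using inY by blast
    then show "x \<in> \<Union>(range Y)" by blast
  qed
  have op: "\<forall>V\<in>range Y. openin F V" using Yo by blast
  have "\<forall>\<U>. (\<forall>V\<in>\<U>. openin F V) \<and> S \<subseteq> \<Union>\<U> \<longrightarrow> (\<exists>\<V>. finite \<V> \<and> \<V> \<subseteq> \<U> \<and> S \<subseteq> \<Union>\<V>)"
    using S unfolding compactin_def by (rule conjunct2)
  then have "\<exists>\<V>. finite \<V> \<and> \<V> \<subseteq> range Y \<and> S \<subseteq> \<Union>\<V>" using op cov by blast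
  then obtain V where V: "finite V" "V \<subseteq> range Y" "S \<subseteq> \<Union>V" by blast
  obtain B where B: "finite B" "V = Y ` B" using finite_subset_image[OF V(1,2)] by blast
  obtain u where u: "\<forall>s\<in>B. s < u" using w_bound[OF w1 countable_finite[OF B(1)]] by blast
  have "\<Union>V \<subseteq> X u" unfolding B(2) using u YX by blast
  then show ?thesis using V(3) by blast
qed

lemma C_compact: "compactin F (C a)"
proof -
  have "compactin F K" using KF Kc compactin_subspace by blast
  moreover have "compactin F (\<Union>i\<in>{1..n}. F closure_of (U i a))"
  proof (rule compactin_Union)
    show "finite ((\<lambda>i. F closure_of (U i a)) ` {1..n})" by simp
    show "\<And>S. S \<in> (\<lambda>i. F closure_of (U i a)) ` {1..n} \<Longrightarrow> compactin F S"
      using Ucl_compact[OF ob] by blast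
  qed
  ultimately show ?thesis unfolding C_def by (rule compactin_Un)
qed

lemma XC: "X a \<subseteq> C a"
proof -
  have "(\<Union>b\<in>{b. b < a}. U i b) \<subseteq> F closure_of (U i a)" if i: "i \<in> {1..n}" for i
  proof -
    have "U i b \<subseteq> F closure_of (U i a)" if "b < a" for b
    proof -
      have "U i b \<subseteq> U i a" using Umono[OF i] that by simp
      also have "\<dots> \<subseteq> F closure_of (U i a)" using closure_of_subset[OF UF[OF i]] .
      finally show ?thesis .
    qed
    then show ?thesis by blast
  qed
  then have "(\<Union>i\<in>{1..n}. \<Union>b\<in>{b. b < a}. U i b) \<subseteq> (\<Union>i\<in>{1..n}. F closure_of (U i a))"
    by (rule UN_mono[OF subset_refl])
  then show ?thesis unfolding X_def C_def by (rule Un_mono[OF subset_refl])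
qed

lemma Hc: "continuous_map (prod_topology F (top_of_set {0..1})) F H"
  using iso unfolding isotopy_def by (rule conjunct1)

lemma Hh: "t \<in> {0..1} \<Longrightarrow> homeomorphic_map F F (\<lambda>x. H (x, t))"
  using iso unfolding isotopy_def by (metis (no_types, lifting))

lemma HF: assumes "x \<in> topspace F" "t \<in> {0..1}" shows "H (x, t) \<in> topspace F"
proof -
  have "(x, t) \<in> topspace (prod_topology F (top_of_set {0..1}))" using assms by simp
  then show ?thesis using continuous_map_image_subset_topspace[OF Hc] by blast
qed

definition Q :: "real set" where "Q = \<rat> \<inter> {0..1}"

lemma Q_countable: "countable Q"
  unfolding Q_def using countable_rat by (rule countable_Int1)

lemma step: "\<exists>g. a < g \<and> (\<forall>t\<in>{0..1}. \<forall>x\<in>C a. H (x, t) \<in> X g) \<and>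
     (\<forall>q\<in>Q. \<forall>y\<in>topspace F. H (y, q) \<in> C a \<longrightarrow> y \<in> X g)"
proof -
  have "compactin (top_of_set {0..1::real}) {0..1}"
    by (simp add: compactin_subtopology compactin_euclidean_iff)
  then have "compactin (prod_topology F (top_of_set {0..1::real})) (C a \<times> {0..1})"
    using C_compact by (simp add: compactin_Times)
  then have "compactin F (H ` (C a \<times> {0..1}))" using image_compactin Hc by blast
  then obtain g1 where g1: "H ` (C a \<times> {0..1}) \<subseteq> X g1" using cover by blast
  have "\<forall>q\<in>Q. \<exists>g. \<forall>y\<in>topspace F. H (y, q) \<in> C a \<longrightarrow> y \<in> X g"
  proof
    fix q assume "q \<in> Q"
    then have q: "q \<in> {0..1}" unfolding Q_def by blast
    obtain h' where hm: "homeomorphic_maps F F (\<lambda>x. H (x, q)) h'"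
      using Hh[OF q] homeomorphic_map_maps by blast
    then have h'c: "continuous_map F F h'" and inv: "\<And>y. y \<in> topspace F \<Longrightarrow> h' (H (y, q)) = y"
      unfolding homeomorphic_maps_def by auto
    have "compactin F (h' ` C a)" using image_compactin[OF C_compact h'c] .
    then obtain g where g: "h' ` C a \<subseteq> X g" using cover by blast
    have "y \<in> X g" if "y \<in> topspace F" "H (y, q) \<in> C a" for y
      using g that inv[OF that(1)] by (metis image_subset_iff)
    then show "\<exists>g. \<forall>y\<in>topspace F. H (y, q) \<in> C a \<longrightarrow> y \<in> X g" by blast
  qed
  from bchoice[OF this] obtain gq where gq: "\<forall>q\<in>Q. \<forall>y\<in>topspace F. H (y, q) \<in> C a \<longrightarrow> y \<in> X (gq q)"
    by blast
  have "countable ({a, g1} \<union> gq ` Q)" using Q_countable by simp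
  then obtain u where u: "\<forall>s\<in>{a, g1} \<union> gq ` Q. s < u" using w_bound[OF w1] by blast
  have "a < u" using u by simp
  moreover have "\<forall>t\<in>{0..1}. \<forall>x\<in>C a. H (x, t) \<in> X u"
  proof (intro ballI)
    fix t x assume "t \<in> {0..1::real}" "x \<in> C a"
    then have "H (x, t) \<in> X g1" using g1 by blast
    moreover have "g1 < u" using u by simp
    then have "X g1 \<subseteq> X u" using X_mono less_imp_le by blast
    ultimately show "H (x, t) \<in> X u" by blast
  qed
  moreover have "\<forall>q\<in>Q. \<forall>y\<in>topspace F. H (y, q) \<in> C a \<longrightarrow> y \<in> X u"
  proof (intro ballI impI)
    fix q y assume "q \<in> Q" "y \<in> topspace F" "H (y, q) \<in> C a"
    then have "y \<in> X (gq q)" using gq by blast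
    moreover have "gq q < u" using u \<open>q \<in> Q\<close> by simp
    then have "X (gq q) \<subseteq> X u" using X_mono less_imp_le by blast
    ultimately show "y \<in> X u" by blast
  qed
  ultimately show ?thesis by blast
qed


definition fixedset :: "'w set" where
  "fixedset = {a. \<forall>t\<in>{0..1}. (\<lambda>x. H (x, t)) ` X a = X a}"

lemma unbounded: "\<exists>g\<in>fixedset. a0 \<le> g"
proof -
  define Pst where "Pst a g \<longleftrightarrow> a < g \<and> (\<forall>t\<in>{0..1}. \<forall>x\<in>C a. H (x, t) \<in> X g) \<and>
     (\<forall>q\<in>Q. \<forall>y\<in>topspace F. H (y, q) \<in> C a \<longrightarrow> y \<in> X g)" for a g
  define nxt where "nxt a = (SOME g. Pst a g)" for a
  have Pn: "Pst a (nxt a)" for a unfolding nxt_def by (rule someI_ex) (use step in \<open>simp add: Pst_def\<close>)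
  define sq where "sq k = (nxt ^^ k) a0" for k
  have sqS: "sq (Suc k) = nxt (sq k)" for k unfolding sq_def by simp
  have P1: "Pst (sq k) (sq (Suc k))" for k unfolding sqS by (rule Pn)
  have inc: "sq k < sq (Suc k)" for k using P1[of k] unfolding Pst_def by blast
  have "countable (range sq)" by simp
  then obtain u0 where u0: "\<forall>s\<in>range sq. s < u0" using w_bound[OF w1] by blast
  define gs where "gs = (LEAST u. \<forall>k. sq k \<le> u)"
  have ex: "\<exists>u. \<forall>k. sq k \<le> u" using u0 less_imp_le by blast
  have le: "sq k \<le> gs" for k using LeastI_ex[OF ex] unfolding gs_def by blast
  have bl: "\<exists>k. b < sq k" if "b < gs" for b
  proof (rule ccontr)
    assume "\<not> (\<exists>k. b < sq k)"
    then have "\<forall>k. sq k \<le> b" by (simp add: not_less)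
    then have "gs \<le> b" unfolding gs_def by (rule Least_le)
    then show False using that by simp
  qed
  have lt: "sq k < gs" for k using inc[of k] le[of "Suc k"] by simp
  have Xeq: "X gs = (\<Union>k. X (sq k))"
  proof
    show "X gs \<subseteq> (\<Union>k. X (sq k))"
    proof
      fix x assume x: "x \<in> X gs"
      show "x \<in> (\<Union>k. X (sq k))"
      proof (cases "x \<in> K")
        case True then show ?thesis unfolding X_def by blast
      next
        case False
        then obtain i b where ib: "i \<in> {1..n}" "b < gs" "x \<in> U i b" using x unfolding X_def by blast
        then obtain k where "b < sq k" using bl by blast
        then have "x \<in> X (sq k)" using ib unfolding X_def by blast
        then show ?thesis by blast
      qed
    qed
    show "(\<Union>k. X (sq k)) \<subseteq> X gs" by (rule UN_least, rule X_mono[OF le])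
  qed
  have oX: "openin F (X gs)" using X_open lt by blast
  have fw: "H (x, t) \<in> X (sq (Suc k))" if "t \<in> {0..1}" "x \<in> C (sq k)" for k t x
  proof -
    have "\<forall>t\<in>{0..1}. \<forall>x\<in>C (sq k). H (x, t) \<in> X (sq (Suc k))"
      using P1[of k] unfolding Pst_def by (rule conjunct1[OF conjunct2])
    then show ?thesis using that by blast
  qed
  have bw: "y \<in> X (sq (Suc k))" if "q \<in> Q" "y \<in> topspace F" "H (y, q) \<in> C (sq k)" for k q y
  proof -
    have "\<forall>q\<in>Q. \<forall>y\<in>topspace F. H (y, q) \<in> C (sq k) \<longrightarrow> y \<in> X (sq (Suc k))"
      using P1[of k] unfolding Pst_def by (rule conjunct2[OF conjunct2])
    then show ?thesis using that by blast
  qed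
  have fwd: "H (x, t) \<in> X gs" if hx: "x \<in> X gs" "t \<in> {0..1}" for x t
  proof -
    obtain k where "x \<in> X (sq k)" using hx(1) unfolding Xeq by blast
    then have "x \<in> C (sq k)" using XC by (rule subsetD[rotated])
    then have "H (x, t) \<in> X (sq (Suc k))" using fw hx(2) by simp
    then show ?thesis unfolding Xeq by blast
  qed
  have bwd: "y \<in> X gs" if hy: "y \<in> topspace F" "q \<in> Q" "H (y, q) \<in> X gs" for y q
  proof -
    obtain k where "H (y, q) \<in> X (sq k)" using hy(3) unfolding Xeq by blast
    then have "H (y, q) \<in> C (sq k)" using XC by (rule subsetD[rotated])
    then have "y \<in> X (sq (Suc k))" using bw hy(1,2) by simp
    then show ?thesis unfolding Xeq by blast
  qed
  have "gs \<in> fixedset" unfolding fixedset_def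
  proof (intro CollectI ballI)
    fix t :: real assume t: "t \<in> {0..1}"
    show "(\<lambda>x. H (x, t)) ` X gs = X gs"
    proof
      show "(\<lambda>x. H (x, t)) ` X gs \<subseteq> X gs"
      proof
        fix z assume "z \<in> (\<lambda>x. H (x, t)) ` X gs"
        then obtain x where "x \<in> X gs" "z = H (x, t)" by blast
        then show "z \<in> X gs" using fwd t by simp
      qed
      show "X gs \<subseteq> (\<lambda>x. H (x, t)) ` X gs"
      proof
        fix x assume x: "x \<in> X gs"
        then have "x \<in> topspace F" using XF by blast
        have sj: "(\<lambda>x. H (x, t)) ` topspace F = topspace F"
          by (rule homeomorphic_imp_surjective_map[OF Hh[OF t]])
        have "x \<in> (\<lambda>x. H (x, t)) ` topspace F" unfolding sj by fact
        then obtain y where y: "y \<in> topspace F" "x = H (y, t)" by blast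
        have cy: "continuous_map (top_of_set {0..1}) F (\<lambda>q. H (y, q))"
        proof -
          have "continuous_map (top_of_set {0..1::real}) (prod_topology F (top_of_set {0..1})) (\<lambda>q. (y, q))"
            unfolding continuous_map_pairwise o_def using y(1) by simp
          from continuous_map_compose[OF this Hc] show ?thesis by (simp add: o_def)
        qed
        define T where "T = {q \<in> topspace (top_of_set {0..1::real}). H (y, q) \<in> X gs}"
        have "openin (top_of_set {0..1}) T"
          unfolding T_def by (rule openin_continuous_map_preimage[OF cy oX])
        then obtain Ob where Ob: "open Ob" "T = {0..1} \<inter> Ob" by (auto simp: openin_open)
        have "t \<in> T" unfolding T_def using t x y(2) by simp
        then have "t \<in> Ob" using Ob by blast
        then obtain \<delta> where d: "\<delta> > 0" "ball t \<delta> \<subseteq> Ob" using Ob(1) open_contains_ball by blast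
        have "max 0 (t - \<delta>) < min 1 (t + \<delta>)" using t d(1) by auto
        then obtain r where r: "r \<in> \<rat>" "max 0 (t - \<delta>) < r" "r < min 1 (t + \<delta>)"
          using Rats_dense_in_real by blast
        have r01: "r \<in> {0..1}" using r by auto
        have "dist t r < \<delta>" using r by (auto simp: dist_real_def)
        then have "r \<in> Ob" using d(2) by auto
        then have "r \<in> T" using Ob(2) r01 by blast
        then have "H (y, r) \<in> X gs" unfolding T_def by blast
        moreover have "r \<in> Q" unfolding Q_def using r(1) r01 by blast
        ultimately have "y \<in> X gs" using bwd y(1) by blast
        then show "x \<in> (\<lambda>x. H (x, t)) ` X gs" using y(2) by blast
      qed
    qed
  qed
  moreover have "a0 \<le> gs" using le[of 0] unfolding sq_def by simp
  ultimately show ?thesis by blast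
qed

lemma closedness:
  assumes S: "S \<subseteq> fixedset" "S \<noteq> {}" "\<exists>u. \<forall>s\<in>S. s \<le> u"
  shows "(LEAST u. \<forall>s\<in>S. s \<le> u) \<in> fixedset"
proof -
  define l where "l = (LEAST u. \<forall>s\<in>S. s \<le> u)"
  have le: "s \<le> l" if "s \<in> S" for s using LeastI_ex[OF S(3)] that unfolding l_def by blast
  have bl: "\<exists>s\<in>S. b < s" if "b < l" for b
  proof (rule ccontr)
    assume "\<not> (\<exists>s\<in>S. b < s)"
    then have "\<forall>s\<in>S. s \<le> b" by (simp add: not_less)
    then have "l \<le> b" unfolding l_def by (rule Least_le)
    then show False using that by simp
  qed
  obtain s0 where s0: "s0 \<in> S" using S(2) by blast
  have Xeq: "X l = (\<Union>s\<in>S. X s)"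
  proof
    show "X l \<subseteq> (\<Union>s\<in>S. X s)"
    proof
      fix x assume x: "x \<in> X l"
      show "x \<in> (\<Union>s\<in>S. X s)"
      proof (cases "x \<in> K")
        case True then show ?thesis using s0 unfolding X_def by blast
      next
        case False
        then obtain i b where ib: "i \<in> {1..n}" "b < l" "x \<in> U i b" using x unfolding X_def by blast
        then obtain s where "s \<in> S" "b < s" using bl by blast
        then show ?thesis using ib unfolding X_def by blast
      qed
    qed
    show "(\<Union>s\<in>S. X s) \<subseteq> X l" by (rule UN_least, rule X_mono[OF le])
  qed
  show ?thesis unfolding l_def[symmetric] fixedset_def
  proof (intro CollectI ballI)
    fix t :: real assume t: "t \<in> {0..1}"
    have "(\<lambda>x. H (x, t)) ` X l = (\<Union>s\<in>S. (\<lambda>x. H (x, t)) ` X s)" unfolding Xeq by (rule image_UN)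
    also have "\<dots> = (\<Union>s\<in>S. X s)"
      using S(1) t unfolding fixedset_def by (intro SUP_cong refl) blast
    finally show "(\<lambda>x. H (x, t)) ` X l = X l" using Xeq by simp
  qed
qed

lemma club_fixed: "club fixedset"
  unfolding club_def using unbounded closedness by blast

end

theorem corollary3p2:
  fixes F :: "'a topology" and K :: "'a set" and n :: nat
    and P :: "nat \<Rightarrow> 'a set" and U :: "nat \<Rightarrow> 'w::wellorder \<Rightarrow> 'a set"
    and H :: "'a \<times> real \<Rightarrow> 'a"
  assumes "omega1_type TYPE('w)"
    and "surface F" and "omega_bounded F"
    and "nyikos_decomp F K n P U"
    and "isotopy F H"
  shows "club {a::'w. \<forall>t\<in>{0..1}.
            (\<lambda>x. H (x, t)) ` (K \<union> (\<Union>i\<in>{1..n}. \<Union>b\<in>{b. b < a}. U i b))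
              = K \<union> (\<Union>i\<in>{1..n}. \<Union>b\<in>{b. b < a}. U i b)}"
proof -
  interpret nyk2 F K n P U H
    by unfold_locales (use assms in auto)
  show ?thesis using club_fixed unfolding fixedset_def X_def .
qed

end
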